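(* For $n\ge 1$ and $1\le p\le n$ let $b(n,p)$ be the number of $\alpha\in\mathcal{ORCT}^*_n$ with $|\mathrm{Im}\,\alpha|=p$ and exactly one fixed point, and set $b(n,0)=0$ for all $n\ge 0$. Then $b(n,1)=n$ for all $n\ge1$, $b(2,2)=0$, and for all $n\ge p\ge 2$, $$b(n,p)=(n-p+1)\binom{n-2}{p-1}+b(n-2,p-2).$$
   Context: $X_n=\{1,2,\dots,n\}$ with its usual order; maps are written on the right ($x\alpha$). A map $\alpha:X_n\to X_n$ is order-reversing if $x\le y$ implies $x\alpha\ge y\alpha$, and a contraction if $|x\alpha-y\alpha|\le|x-y|$ for all $x,y$. $\mathcal{ORCT}^*_n$ is the set of all order-reversing contractions $X_n\to X_n$ defined on all of $X_n$ (this includes the constant maps). A fixed point of $\alpha$ is $x$ with $x\alpha=x$. Binomial coefficients $\binom{a}{b}$ with $b>a\ge0$ are $0$. *)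

theory Defs
  imports Main "HOL-Library.FuncSet"
begin

text \<open>Full transformations of X_n = {1..n}, represented extensionally
  (value undefined outside {1..n}); order-reversing contractions.\<close>
definition ORCT :: "nat \<Rightarrow> (nat \<Rightarrow> nat) set" where
  "ORCT n = {\<alpha> \<in> {1..n} \<rightarrow>\<^sub>E {1..n}.
      (\<forall>x\<in>{1..n}. \<forall>y\<in>{1..n}. x \<le> y \<longrightarrow> \<alpha> y \<le> \<alpha> x) \<and>
      (\<forall>x\<in>{1..n}. \<forall>y\<in>{1..n}. \<bar>int (\<alpha> x) - int (\<alpha> y)\<bar> \<le> \<bar>int x - int y\<bar>)}"

definition fixed_points :: "nat \<Rightarrow> (nat \<Rightarrow> nat) \<Rightarrow> nat set" where
  "fixed_points n \<alpha> = {x \<in> {1..n}. \<alpha> x = x}"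

definition b :: "nat \<Rightarrow> nat \<Rightarrow> nat" where
  "b n p = (if p = 0 then 0 else
     card {\<alpha> \<in> ORCT n. card (\<alpha> ` {1..n}) = p \<and> card (fixed_points n \<alpha>) = 1})"

end

theory Submission
  imports Defs
begin



definition orcm :: "nat \<Rightarrow> nat \<Rightarrow> (nat \<Rightarrow> nat) \<Rightarrow> bool" where
"orcm m n g \<longleftrightarrow> g \<in> {1..m} \<rightarrow>\<^sub>E {1..n} \<and>
   (\<forall>x. 1 \<le> x \<longrightarrow> x < m \<longrightarrow> g (Suc x) \<le> g x \<and> g x \<le> Suc (g (Suc x)))"

lemma orcm_mono_aux:
  assumes "orcm m n g" "1 \<le> x"
  shows "x + k \<le> m \<Longrightarrow> g (x+k) \<le> g x \<and> g x \<le> g (x+k) + k"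
proof (induction k)
  case 0 then show ?case by simp
next
  case (Suc k)
  then have "g (Suc (x+k)) \<le> g (x+k) \<and> g (x+k) \<le> Suc (g (Suc (x+k)))"
    using assms unfolding orcm_def by auto
  with Suc show ?case by auto
qed

lemma orcm_mono:
  assumes "orcm m n g" "1 \<le> x" "x \<le> y" "y \<le> m"
  shows "g y \<le> g x \<and> g x \<le> g y + (y - x)"
  using orcm_mono_aux[OF assms(1,2), of "y - x"] assms by simp

lemma orcm_range: "orcm m n g \<Longrightarrow> x \<in> {1..m} \<Longrightarrow> g x \<in> {1..n}"
  unfolding orcm_def by (auto simp: PiE_iff)

lemma orcm_out: "orcm m n g \<Longrightarrow> x \<notin> {1..m} \<Longrightarrow> g x = undefined"
  unfolding orcm_def PiE_def extensional_def by auto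

lemma ORCT_eq: "ORCT n = {g. orcm n n g}"
proof (intro set_eqI iffI; simp)
  fix g assume "g \<in> ORCT n"
  then have g1: "g \<in> {1..n} \<rightarrow>\<^sub>E {1..n}"
    and g2: "\<forall>x\<in>{1..n}. \<forall>y\<in>{1..n}. x \<le> y \<longrightarrow> g y \<le> g x"
    and g3: "\<forall>x\<in>{1..n}. \<forall>y\<in>{1..n}. \<bar>int (g x) - int (g y)\<bar> \<le> \<bar>int x - int y\<bar>"
    unfolding ORCT_def by auto
  have "g (Suc x) \<le> g x \<and> g x \<le> Suc (g (Suc x))" if "1 \<le> x" "x < n" for x
  proof -
    have i: "x \<in> {1..n}" "Suc x \<in> {1..n}" using that by auto
    have "g (Suc x) \<le> g x" using g2 i by auto
    moreover have "\<bar>int (g x) - int (g (Suc x))\<bar> \<le> \<bar>int x - int (Suc x)\<bar>"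
      using g3 i by blast
    ultimately show ?thesis by auto
  qed
  then show "orcm n n g" using g1 unfolding orcm_def by auto
next
  fix g assume g: "orcm n n g"
  have "\<bar>int (g x) - int (g y)\<bar> \<le> \<bar>int x - int y\<bar>" if "x \<in> {1..n}" "y \<in> {1..n}" for x y
  proof (cases "x \<le> y")
    case True then show ?thesis using orcm_mono[OF g, of x y] that by auto
  next
    case False then show ?thesis using orcm_mono[OF g, of y x] that by auto
  qed
  then show "g \<in> ORCT n" using g orcm_mono[OF g] unfolding ORCT_def orcm_def by auto
qed

lemma orcm_image_aux:
  assumes "orcm m n g"
  shows "1 + k \<le> m \<Longrightarrow> g ` {1..1+k} = {g (1+k)..g 1}"
proof (induction k)
  case 0 then show ?case by simp
next
  case (Suc k)
  have a: "g (Suc (1+k)) \<le> g (1+k) \<and> g (1+k) \<le> Suc (g (Suc (1+k)))"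
    using assms Suc.prems unfolding orcm_def by auto
  have b: "g (1+k) \<le> g 1" using orcm_mono[OF assms, of 1 "1+k"] Suc.prems by auto
  have "{1..1 + Suc k} = insert (Suc (1+k)) {1..1+k}" by auto
  then have "g ` {1..1 + Suc k} = insert (g (Suc (1+k))) {g (1+k)..g 1}"
    using Suc by auto
  also have "\<dots> = {g (Suc (1+k))..g 1}" using a b by auto
  finally show ?case by simp
qed

lemma orcm_image:
  assumes "orcm m n g" "1 \<le> m"
  shows "g ` {1..m} = {g m..g 1}"
  using orcm_image_aux[OF assms(1), of "m - 1"] assms by simp

lemma orcm_card_image:
  assumes "orcm m n g" "1 \<le> m"
  shows "card (g ` {1..m}) = g 1 + 1 - g m"
  using orcm_image[OF assms] by simp




definition steps :: "nat \<Rightarrow> (nat \<Rightarrow> nat) \<Rightarrow> nat set" where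
  "steps m g = {s \<in> {1..m-1}. g (Suc s) < g s}"

lemma cardstep:
  assumes "finite S"
  shows "card {s\<in>S. x \<le> s} = card {s\<in>S. Suc x \<le> s} + (if x \<in> S then 1 else 0)"
proof -
  have e: "{s\<in>S. x \<le> s} = {s\<in>S. Suc x \<le> s} \<union> ({x} \<inter> S)" by auto
  have "card ({s\<in>S. Suc x \<le> s} \<union> ({x} \<inter> S)) = card {s\<in>S. Suc x \<le> s} + card ({x} \<inter> S)"
    by (rule card_Un_disjoint) (use assms in auto)
  then show ?thesis unfolding e by auto
qed

lemma recon_aux:
  assumes g: "orcm m n g"
  shows "k < m \<Longrightarrow> g (m - k) = g m + card {s \<in> steps m g. m - k \<le> s}"
proof (induction k)
  case 0
  have e: "{s \<in> steps m g. m \<le> s} = {}" unfolding steps_def by auto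
  show ?case unfolding diff_zero e by simp
next
  case (Suc k)
  define x where "x = m - Suc k"
  have x1: "1 \<le> x" "x < m" "Suc x = m - k" using Suc.prems unfolding x_def by auto
  have a: "g (Suc x) \<le> g x \<and> g x \<le> Suc (g (Suc x))" using g x1 unfolding orcm_def by auto
  have fin: "finite (steps m g)" unfolding steps_def by auto
  have "card {s \<in> steps m g. x \<le> s} = card {s \<in> steps m g. Suc x \<le> s} + (if x \<in> steps m g then 1 else 0)"
    by (rule cardstep[OF fin])
  moreover have "(x \<in> steps m g) = (g (Suc x) < g x)" using x1 unfolding steps_def by auto
  moreover have "g (Suc x) = g m + card {s \<in> steps m g. Suc x \<le> s}" using Suc x1 by auto
  ultimately have "g x = g m + card {s \<in> steps m g. x \<le> s}" using a by auto
  then show ?case unfolding x_def .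
qed

lemma recon:
  assumes g: "orcm m n g" and x: "x \<in> {1..m}"
  shows "g x = g m + card {s \<in> steps m g. x \<le> s}"
  using recon_aux[OF g, of "m - x"] x by auto

definition mk :: "nat \<Rightarrow> nat \<Rightarrow> nat set \<Rightarrow> (nat \<Rightarrow> nat)" where
  "mk m c S = (\<lambda>x. if x \<in> {1..m} then c + card {s\<in>S. x \<le> s} else undefined)"

definition FF :: "nat \<Rightarrow> nat \<Rightarrow> nat \<Rightarrow> (nat \<Rightarrow> nat) set" where
  "FF m n p = {g. orcm m n g \<and> card (g ` {1..m}) = p}"

lemma card_FF:
  assumes m: "1 \<le> m" and p: "1 \<le> p"
  shows "card (FF m n p) = (n + 1 - p) * ((m - 1) choose (p - 1))"
proof -
  define T where "T = {1..n+1-p} \<times> {S. S \<subseteq> {1..m-1} \<and> card S = p - 1}"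
  have cT: "card T = (n + 1 - p) * ((m - 1) choose (p - 1))"
    unfolding T_def card_cartesian_product by (simp add: n_subsets)
  define Psi where "Psi = (\<lambda>g. (g m, steps m g))"
  define Phi where "Phi = (\<lambda>(c, S). mk m c S)"
  have "bij_betw Psi (FF m n p) T"
  proof (rule bij_betw_byWitness[where f' = Phi])
    show "\<forall>g\<in>FF m n p. Phi (Psi g) = g"
    proof
      fix g assume "g \<in> FF m n p"
      then have g: "orcm m n g" unfolding FF_def by auto
      show "Phi (Psi g) = g"
      proof
        fix x show "Phi (Psi g) x = g x"
          using recon[OF g, of x] orcm_out[OF g, of x]
          unfolding Phi_def Psi_def mk_def by auto
      qed
    qed
    show "\<forall>t\<in>T. Psi (Phi t) = t"
    proof
      fix t assume "t \<in> T"
      then obtain c S where t: "t = (c, S)" "S \<subseteq> {1..m-1}" unfolding T_def by auto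
      have fS: "finite S" using t(2) finite_subset by auto
      have e: "{s\<in>S. m \<le> s} = {}" using t(2) by (auto dest!: subsetD simp: atLeastAtMost_iff)
      have 1: "mk m c S m = c" using m unfolding mk_def e by simp
      have "steps m (mk m c S) = S"
      proof (intro set_eqI iffI)
        fix s assume "s \<in> steps m (mk m c S)"
        then have s: "s \<in> {1..m-1}" "mk m c S (Suc s) < mk m c S s" unfolding steps_def by auto
        then show "s \<in> S" using cardstep[OF fS, of s] unfolding mk_def by (auto split: if_splits)
      next
        fix s assume "s \<in> S"
        then have s: "s \<in> {1..m-1}" using t by auto
        then show "s \<in> steps m (mk m c S)" using cardstep[OF fS, of s] \<open>s \<in> S\<close>
          unfolding mk_def steps_def by auto
      qed
      then show "Psi (Phi t) = t" using 1 t unfolding Psi_def Phi_def by auto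
    qed
    show "Psi ` FF m n p \<subseteq> T"
    proof
      fix y assume "y \<in> Psi ` FF m n p"
      then obtain g where g: "orcm m n g" "card (g ` {1..m}) = p" and y: "y = Psi g"
        unfolding FF_def by auto
      have c: "card (g ` {1..m}) = g 1 + 1 - g m" by (rule orcm_card_image[OF g(1) m])
      have le: "g m \<le> g 1" using orcm_mono[OF g(1), of 1 m] m by auto
      have r: "g 1 \<in> {1..n}" "g m \<in> {1..n}" using orcm_range[OF g(1)] m by auto
      have "{s \<in> steps m g. 1 \<le> s} = steps m g" unfolding steps_def by auto
      then have "g 1 = g m + card (steps m g)" using recon[OF g(1), of 1] m by auto
      then have "card (steps m g) = p - 1" using c g(2) le by auto
      moreover have "steps m g \<subseteq> {1..m-1}" unfolding steps_def by auto
      moreover have "g m \<in> {1..n+1-p}" using c g(2) le r by auto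
      ultimately show "y \<in> T" unfolding y Psi_def T_def by auto
    qed
    show "Phi ` T \<subseteq> FF m n p"
    proof
      fix y assume "y \<in> Phi ` T"
      then obtain c S where t: "y = mk m c S" "S \<subseteq> {1..m-1}" "card S = p - 1" "c \<in> {1..n+1-p}"
        unfolding T_def Phi_def by auto
      have fS: "finite S" using t(2) finite_subset by auto
      have le: "card {s\<in>S. x \<le> s} \<le> card S" for x
        by (rule card_mono[OF fS]) auto
      have g: "orcm m n y"
        unfolding orcm_def
      proof (rule conjI)
        show "y \<in> {1..m} \<rightarrow>\<^sub>E {1..n}"
          unfolding t(1) mk_def PiE_def extensional_def Pi_def
          using le t(3,4) p by (auto intro: order_trans[OF add_left_mono[OF le]])
      next
        show "\<forall>x. 1 \<le> x \<longrightarrow> x < m \<longrightarrow> y (Suc x) \<le> y x \<and> y x \<le> Suc (y (Suc x))"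
        proof (intro allI impI)
          fix x assume "1 \<le> x" "x < m"
          then show "y (Suc x) \<le> y x \<and> y x \<le> Suc (y (Suc x))"
            unfolding t(1) mk_def using cardstep[OF fS, of x] by auto
        qed
      qed
      have e: "{s\<in>S. m \<le> s} = {}" using t(2) by (auto dest!: subsetD simp: atLeastAtMost_iff)
      have 1: "y m = c" using m unfolding t(1) mk_def e by simp
      have e2: "{s\<in>S. 1 \<le> s} = S" using t(2) by auto
      have 2: "y 1 = c + (p - 1)" using m t(3) unfolding t(1) mk_def e2 by simp
      have "card (y ` {1..m}) = p" using orcm_card_image[OF g m] 1 2 p by auto
      then show "y \<in> FF m n p" using g unfolding FF_def by auto
    qed
  qed
  then show ?thesis using cT bij_betw_same_card by metis
qed




lemma fix_unique:
  assumes a: "orcm n n a" and x: "x \<in> {1..n}" "a x = x" and y: "y \<in> {1..n}" "a y = y"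
  shows "x = y"
proof (rule ccontr)
  assume "x \<noteq> y"
  then consider "x < y" | "y < x" by linarith
  then show False
  proof cases
    case 1 then show False using orcm_mono[OF a, of x y] x y by auto
  next
    case 2 then show False using orcm_mono[OF a, of y x] x y by auto
  qed
qed

definition fp :: "nat \<Rightarrow> (nat \<Rightarrow> nat) \<Rightarrow> nat" where
  "fp n a = (THE x. x \<in> {1..n} \<and> a x = x)"

lemma fp_eq:
  assumes a: "orcm n n a" and x: "x \<in> {1..n}" "a x = x"
  shows "fp n a = x"
  unfolding fp_def
proof (rule the_equality)
  show "x \<in> {1..n} \<and> a x = x" using x by auto
  fix y assume "y \<in> {1..n} \<and> a y = y" then show "y = x" using fix_unique[OF a x] by auto
qed

definition AA :: "nat \<Rightarrow> nat \<Rightarrow> (nat \<Rightarrow> nat) set" where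
  "AA n p = {a. orcm n n a \<and> card (a ` {1..n}) = p \<and> (\<exists>x\<in>{1..n}. a x = x)}"

lemma b_eq:
  assumes "1 \<le> p"
  shows "b n p = card (AA n p)"
proof -
  have "{a \<in> ORCT n. card (a ` {1..n}) = p \<and> card (fixed_points n a) = 1} = AA n p"
  proof (intro set_eqI iffI)
    fix a assume "a \<in> {a \<in> ORCT n. card (a ` {1..n}) = p \<and> card (fixed_points n a) = 1}"
    then have a: "orcm n n a" "card (a ` {1..n}) = p" "card (fixed_points n a) = 1"
      unfolding ORCT_eq by auto
    obtain x where "fixed_points n a = {x}" using card_1_singletonE[OF a(3)] by metis
    then have "x \<in> {1..n}" "a x = x" unfolding fixed_points_def by auto
    then show "a \<in> AA n p" using a unfolding AA_def by auto
  next
    fix a assume "a \<in> AA n p"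
    then obtain x where a: "orcm n n a" "card (a ` {1..n}) = p" "x \<in> {1..n}" "a x = x"
      unfolding AA_def by auto
    have "fixed_points n a = {x}" unfolding fixed_points_def
    proof (intro set_eqI iffI)
      fix y assume "y \<in> {x \<in> {1..n}. a x = x}"
      then show "y \<in> {x}" using fix_unique[OF a(1) a(3,4), of y] by auto
    qed (use a in auto)
    then show "a \<in> {a \<in> ORCT n. card (a ` {1..n}) = p \<and> card (fixed_points n a) = 1}"
      using a unfolding ORCT_eq by auto
  qed
  moreover have "p \<noteq> 0" using assms by auto
  ultimately show ?thesis unfolding b_def by presburger
qed

definition A2 :: "nat \<Rightarrow> nat \<Rightarrow> (nat \<Rightarrow> nat) set" where
  "A2 n p = {a \<in> AA n p. \<exists>x. 2 \<le> x \<and> x + 1 \<le> n \<and> a x = x \<and> a (x - 1) = x + 1 \<and> a (x + 1) = x - 1}"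

lemma finite_AA: "finite (AA n p)"
proof (rule finite_subset)
  show "AA n p \<subseteq> {1..n} \<rightarrow>\<^sub>E {1..n}" unfolding AA_def orcm_def by auto
  show "finite ({1..n} \<rightarrow>\<^sub>E {1..n})" by (rule finite_PiE) auto
qed

lemma A2_empty:
  assumes "p \<le> 2" shows "A2 n p = {}"
proof (rule ccontr)
  assume "A2 n p \<noteq> {}"
  then obtain a x where a: "orcm n n a" "card (a ` {1..n}) = p" "2 \<le> x" "x + 1 \<le> n"
     "a (x - 1) = x + 1" "a (x + 1) = x - 1"
    unfolding A2_def AA_def by auto
  have "a (x - 1) \<le> a 1" using orcm_mono[OF a(1), of 1 "x - 1"] a by auto
  moreover have "a n \<le> a (x + 1)" using orcm_mono[OF a(1), of "x + 1" n] a by auto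
  moreover have "card (a ` {1..n}) = a 1 + 1 - a n" using orcm_card_image[OF a(1)] a by auto
  ultimately show False using a assms by auto
qed




lemma orcm_adj: "orcm m n g \<Longrightarrow> 1 \<le> y \<Longrightarrow> y < m \<Longrightarrow> g (Suc y) \<le> g y \<and> g y \<le> Suc (g (Suc y))"
  unfolding orcm_def by auto

lemma orcm_intro:
  assumes "\<And>y. y \<in> {1..m} \<Longrightarrow> g y \<in> {1..n}" "\<And>y. y \<notin> {1..m} \<Longrightarrow> g y = undefined"
    "\<And>y. 1 \<le> y \<Longrightarrow> y < m \<Longrightarrow> g (Suc y) \<le> g y \<and> g y \<le> Suc (g (Suc y))"
  shows "orcm m n g"
  unfolding orcm_def PiE_def extensional_def Pi_def using assms by blast

definition ipt :: "nat \<Rightarrow> (nat \<Rightarrow> nat) \<Rightarrow> nat" where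
  "ipt n g = (LEAST x. 1 \<le> x \<and> (x = n \<or> g x \<le> x))"

lemma ipt_props:
  assumes "1 \<le> n"
  shows "1 \<le> ipt n g \<and> ipt n g \<le> n \<and> (ipt n g = n \<or> g (ipt n g) \<le> ipt n g) \<and>
         (ipt n g = 1 \<or> ipt n g \<le> g (ipt n g - 1))"
proof -
  let ?P = "\<lambda>x. 1 \<le> x \<and> (x = n \<or> g x \<le> x)"
  have Pn: "?P n" using assms by auto
  have 1: "?P (ipt n g)" unfolding ipt_def by (rule LeastI[of ?P, OF Pn])
  have 2: "ipt n g \<le> n" unfolding ipt_def by (rule Least_le[of ?P, OF Pn])
  have 3: "ipt n g = 1 \<or> ipt n g \<le> g (ipt n g - 1)"
  proof (rule ccontr)
    assume c: "\<not> ?thesis"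
    have "ipt n g - 1 < ipt n g" using 1 c by auto
    then have "\<not> ?P (ipt n g - 1)" unfolding ipt_def by (rule not_less_Least)
    then show False using 1 2 c by auto
  qed
  show ?thesis using 1 2 3 by auto
qed

lemma ipt_unique:
  assumes g: "orcm (n - 1) n g" and x: "1 \<le> x" "x \<le> n" "x = n \<or> g x \<le> x" "x = 1 \<or> x \<le> g (x - 1)"
  shows "ipt n g = x"
  unfolding ipt_def
proof (rule Least_equality)
  show "1 \<le> x \<and> (x = n \<or> g x \<le> x)" using x by auto
  fix y assume y: "1 \<le> y \<and> (y = n \<or> g y \<le> y)"
  show "x \<le> y"
  proof (rule ccontr)
    assume "\<not> x \<le> y"
    then have yx: "y < x" by simp
    then have "g y \<le> y" using y x by auto
    moreover have "x \<le> g (x - 1)" using x yx y by auto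
    moreover have "y \<le> x - 1" "x - 1 \<le> n - 1" using yx x by auto
    moreover have "g (x - 1) \<le> g y" using orcm_mono[OF g, of y "x - 1"] yx y x calculation by auto
    ultimately show False using yx by auto
  qed
qed

definition del :: "nat \<Rightarrow> nat \<Rightarrow> (nat \<Rightarrow> nat) \<Rightarrow> (nat \<Rightarrow> nat)" where
  "del n x a = (\<lambda>y. if y \<in> {1..n-1} then (if y < x then a y else a (Suc y)) else undefined)"

definition ins :: "nat \<Rightarrow> nat \<Rightarrow> (nat \<Rightarrow> nat) \<Rightarrow> (nat \<Rightarrow> nat)" where
  "ins n x g = (\<lambda>y. if y \<in> {1..n} then (if y < x then g y else if y = x then x else g (y - 1)) else undefined)"

definition A1 :: "nat \<Rightarrow> nat \<Rightarrow> (nat \<Rightarrow> nat) set" where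
  "A1 n p = AA n p - A2 n p"

lemma del_props:
  assumes aA: "a \<in> A1 n p" and n: "2 \<le> n"
  shows "del n (fp n a) a \<in> FF (n - 1) n p \<and> ipt n (del n (fp n a) a) = fp n a \<and>
         ins n (fp n a) (del n (fp n a) a) = a"
proof -
  from aA obtain x where a: "orcm n n a" "card (a ` {1..n}) = p" "x \<in> {1..n}" "a x = x"
    and notA2: "\<not> (2 \<le> x \<and> x + 1 \<le> n \<and> a (x - 1) = x + 1 \<and> a (x + 1) = x - 1)"
    unfolding A1_def A2_def AA_def by auto
  have fx: "fp n a = x" by (rule fp_eq[OF a(1) a(3,4)])
  have left: "x \<le> a (x - 1) \<and> a (x - 1) \<le> x + 1" if "1 < x"
    using orcm_adj[OF a(1), of "x - 1"] that a(3,4) by auto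
  have right: "a (x + 1) \<le> x \<and> x \<le> a (x + 1) + 1" if "x < n"
    using orcm_adj[OF a(1), of x] that a(3,4) by auto
  have rng: "a y \<in> {1..n}" if "y \<in> {1..n}" for y using orcm_range[OF a(1) that] .
  define d where "d = del n x a"
  have seam: "a (x - 1) \<le> Suc (a (x + 1))" if "1 < x" "x < n"
    using left[OF that(1)] right[OF that(2)] notA2 that by auto
  have dorc: "orcm (n - 1) n d"
  proof (rule orcm_intro)
    fix y assume "y \<in> {1..n-1}" then show "d y \<in> {1..n}" unfolding d_def del_def using rng by auto
  next
    fix y assume "y \<notin> {1..n-1}" then show "d y = undefined" unfolding d_def del_def by auto
  next
    fix y assume y: "1 \<le> y" "y < n - 1"
    consider "Suc y < x" | "Suc y = x" | "x \<le> y" by linarith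
    then show "d (Suc y) \<le> d y \<and> d y \<le> Suc (d (Suc y))"
    proof cases
      case 1 then show ?thesis unfolding d_def del_def using y orcm_adj[OF a(1), of y] by auto
    next
      case 2
      then have "1 < x" "x < n" using y by auto
      then show ?thesis unfolding d_def del_def using y 2 seam right left by auto
    next
      case 3 then show ?thesis unfolding d_def del_def using y orcm_adj[OF a(1), of "Suc y"] by auto
    qed
  qed
  have d1: "d 1 = a 1"
  proof (cases "1 < x")
    case True then show ?thesis unfolding d_def del_def using n by auto
  next
    case False
    then have "x = 1" using a(3) by auto
    then show ?thesis unfolding d_def del_def using n right[of] a(4) rng[of "Suc (Suc 0)"] by auto
  qed
  have dn: "d (n - 1) = a n"
  proof (cases "x < n")
    case True then show ?thesis unfolding d_def del_def using n by auto
  next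
    case False
    then have "x = n" using a(3) by auto
    then show ?thesis unfolding d_def del_def using n left[of] a(4) rng[of "n - 1"] by auto
  qed
  have "card (d ` {1..n-1}) = p"
    using orcm_card_image[OF dorc] orcm_card_image[OF a(1)] n d1 dn a(2) by auto
  then have dF: "d \<in> FF (n - 1) n p" using dorc unfolding FF_def by auto
  have ip: "ipt n d = x"
  proof (rule ipt_unique[OF dorc])
    show "1 \<le> x" "x \<le> n" using a(3) by auto
    show "x = n \<or> d x \<le> x"
    proof (cases "x < n")
      case True then show ?thesis unfolding d_def del_def using right[OF True] a(3) by auto
    qed (use a(3) in auto)
    show "x = 1 \<or> x \<le> d (x - 1)"
    proof (cases "1 < x")
      case True then show ?thesis unfolding d_def del_def using left[OF True] a(3) by auto
    qed (use a(3) in auto)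
  qed
  have ii: "ins n x d = a"
  proof
    fix y
    consider "y \<notin> {1..n}" | "y \<in> {1..n}" "y < x" | "y = x" | "y \<in> {1..n}" "x < y" using a(3) by fastforce
    then show "ins n x d y = a y"
    proof cases
      case 1 then show ?thesis unfolding ins_def using orcm_out[OF a(1)] by auto
    next
      case 2 then show ?thesis unfolding ins_def d_def del_def using a(3) by auto
    next
      case 3 then show ?thesis unfolding ins_def using a(3,4) by auto
    next
      case 4 then show ?thesis unfolding ins_def d_def del_def using a(3) by auto
    qed
  qed
  show ?thesis using dF ip ii fx unfolding d_def by auto
qed




lemma ins_props:
  assumes gF: "g \<in> FF (n - 1) n p" and n: "2 \<le> n"
  shows "ins n (ipt n g) g \<in> A1 n p \<and> fp n (ins n (ipt n g) g) = ipt n g \<and>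
         del n (ipt n g) (ins n (ipt n g) g) = g"
proof -
  from gF have g: "orcm (n - 1) n g" "card (g ` {1..n-1}) = p" unfolding FF_def by auto
  define x where "x = ipt n g"
  have x: "1 \<le> x" "x \<le> n" "x = n \<or> g x \<le> x" "x = 1 \<or> x \<le> g (x - 1)"
    using ipt_props[of n g] n unfolding x_def by auto
  have rng: "g y \<in> {1..n}" if "y \<in> {1..n-1}" for y using orcm_range[OF g(1) that] .
  define a where "a = ins n x g"
  have gx_lo: "x - 1 \<le> g x" if "x < n"
  proof (cases "x = 1")
    case True
    have "g x \<in> {1..n}" by (rule rng) (use that True in auto)
    then show ?thesis using True by auto
  next
    case False
    then have "x \<le> g (x - 1)" using x by auto
    moreover have "g (x - 1) \<le> Suc (g x)" using orcm_adj[OF g(1), of "x - 1"] False x that by auto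
    ultimately show ?thesis by auto
  qed
  have gx1_hi: "g (x - 1) \<le> x + 1" if "1 < x"
  proof (cases "x = n")
    case True
    have "g (x - 1) \<in> {1..n}" by (rule rng) (use that True in auto)
    then show ?thesis using True by auto
  next
    case False
    then have "g x \<le> x" using x by auto
    moreover have "g (x - 1) \<le> Suc (g x)" using orcm_adj[OF g(1), of "x - 1"] False x that by auto
    ultimately show ?thesis by auto
  qed
  have aorc: "orcm n n a"
  proof (rule orcm_intro)
    fix y assume y: "y \<in> {1..n}"
    consider "y < x" | "y = x" | "x < y" by linarith
    then show "a y \<in> {1..n}"
    proof cases
      case 1
      have "g y \<in> {1..n}" by (rule rng) (use 1 x y in auto)
      then show ?thesis unfolding a_def ins_def using 1 y by auto
    next
      case 2 then show ?thesis unfolding a_def ins_def using x y by auto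
    next
      case 3
      have "g (y - 1) \<in> {1..n}" by (rule rng) (use 3 x y in auto)
      then show ?thesis unfolding a_def ins_def using 3 y by auto
    qed
  next
    fix y assume "y \<notin> {1..n}" then show "a y = undefined" unfolding a_def ins_def by auto
  next
    fix y assume y: "1 \<le> y" "y < n"
    consider "Suc y < x" | "Suc y = x" | "y = x" | "x < y" by linarith
    then show "a (Suc y) \<le> a y \<and> a y \<le> Suc (a (Suc y))"
    proof cases
      case 1 then show ?thesis unfolding a_def ins_def using y x orcm_adj[OF g(1), of y] by auto
    next
      case 2
      then have "1 < x" using y by simp
      then show ?thesis unfolding a_def ins_def using y x 2 gx1_hi by auto
    next
      case 3
      then have "x < n" using y by simp
      then show ?thesis unfolding a_def ins_def using y x 3 gx_lo by auto
    next
      case 4 then show ?thesis unfolding a_def ins_def using y x orcm_adj[OF g(1), of "y - 1"] by auto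
    qed
  qed
  have ax: "a x = x" unfolding a_def ins_def using x by auto
  have fpx: "fp n a = x" using fp_eq[OF aorc _ ax] x by auto
  have a1: "a 1 = g 1"
  proof (cases "1 < x")
    case True then show ?thesis unfolding a_def ins_def using n by auto
  next
    case False
    then have "x = 1" using x by auto
    have "g 1 \<in> {1..n}" by (rule rng) (use n in auto)
    then show ?thesis unfolding a_def ins_def using n x \<open>x = 1\<close> by auto
  qed
  have an: "a n = g (n - 1)"
  proof (cases "x < n")
    case True then show ?thesis unfolding a_def ins_def using n by auto
  next
    case False
    then have "x = n" using x by auto
    have "g (n - 1) \<in> {1..n}" by (rule rng) (use n in auto)
    then show ?thesis unfolding a_def ins_def using n x \<open>x = n\<close> by auto
  qed
  have card: "card (a ` {1..n}) = p"
    using orcm_card_image[OF aorc] orcm_card_image[OF g(1)] n a1 an g(2) by auto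
  have notA2: "a \<notin> A2 n p"
  proof
    assume "a \<in> A2 n p"
    then obtain z where z: "2 \<le> z" "z + 1 \<le> n" "a z = z" "a (z - 1) = z + 1" "a (z + 1) = z - 1"
      unfolding A2_def by auto
    have "z = x" using fix_unique[OF aorc, of z x] z ax x by auto
    then have c: "1 \<le> x - 1" "x - 1 \<le> n" "x - 1 < x" "x \<le> n" using z by auto
    have "a (x - 1) = g (x - 1)" unfolding a_def ins_def using c by simp
    moreover have "a (x + 1) = g x" unfolding a_def ins_def using z \<open>z = x\<close> by auto
    ultimately have "g (x - 1) = x + 1" "g x = x - 1" using z \<open>z = x\<close> by auto
    moreover have "g (x - 1) \<le> Suc (g x)" using orcm_adj[OF g(1), of "x - 1"] z \<open>z = x\<close> by auto
    ultimately show False using z \<open>z = x\<close> by auto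
  qed
  have aA1: "a \<in> A1 n p" unfolding A1_def AA_def using aorc card ax x notA2 by auto
  have dd: "del n x a = g"
  proof
    fix y
    show "del n x a y = g y"
      unfolding del_def a_def ins_def using orcm_out[OF g(1), of y] x by auto
  qed
  show ?thesis using aA1 fpx dd unfolding a_def x_def by auto
qed

lemma card_A1:
  assumes n: "2 \<le> n"
  shows "card (A1 n p) = card (FF (n - 1) n p)"
proof -
  have "bij_betw (\<lambda>a. del n (fp n a) a) (A1 n p) (FF (n - 1) n p)"
  proof (rule bij_betw_byWitness[where f' = "\<lambda>g. ins n (ipt n g) g"])
    show "\<forall>a\<in>A1 n p. ins n (ipt n (del n (fp n a) a)) (del n (fp n a) a) = a"
      using del_props[OF _ n] by auto
    show "\<forall>g\<in>FF (n - 1) n p. del n (fp n (ins n (ipt n g) g)) (ins n (ipt n g) g) = g"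
      using ins_props[OF _ n] by auto
    show "(\<lambda>a. del n (fp n a) a) ` A1 n p \<subseteq> FF (n - 1) n p"
      using del_props[OF _ n] by auto
    show "(\<lambda>g. ins n (ipt n g) g) ` FF (n - 1) n p \<subseteq> A1 n p"
      using ins_props[OF _ n] by auto
  qed
  then show ?thesis by (rule bij_betw_same_card)
qed




definition cut :: "nat \<Rightarrow> nat \<Rightarrow> (nat \<Rightarrow> nat) \<Rightarrow> (nat \<Rightarrow> nat)" where
  "cut n x a = (\<lambda>y. if y \<in> {1..n-2} then (if y < x then a y - 2 else a (y + 2)) else undefined)"

definition paste :: "nat \<Rightarrow> nat \<Rightarrow> (nat \<Rightarrow> nat) \<Rightarrow> (nat \<Rightarrow> nat)" where
  "paste n z c = (\<lambda>y. if y \<in> {1..n} then (if y \<le> z then c y + 2 else if y = z + 1 then z + 1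
      else if y = z + 2 then z else c (y - 2)) else undefined)"

lemma cut_props:
  assumes aA: "a \<in> A2 n p"
  shows "cut n (fp n a) a \<in> AA (n - 2) (p - 2) \<and> fp (n - 2) (cut n (fp n a) a) = fp n a - 1 \<and>
         paste n (fp n a - 1) (cut n (fp n a) a) = a"
proof -
  from aA obtain x where a: "orcm n n a" "card (a ` {1..n}) = p" "2 \<le> x" "x + 1 \<le> n"
      "a x = x" "a (x - 1) = x + 1" "a (x + 1) = x - 1"
    unfolding A2_def AA_def by auto
  have fx: "fp n a = x" by (rule fp_eq[OF a(1)]) (use a in auto)
  have big: "x + 1 \<le> a y" if "1 \<le> y" "y \<le> x - 1" for y
    using orcm_mono[OF a(1), of y "x - 1"] that a by auto
  have small: "a y \<le> x - 1" if "x + 1 \<le> y" "y \<le> n" for y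
    using orcm_mono[OF a(1), of "x + 1" y] that a by auto
  have rng: "a y \<in> {1..n}" if "1 \<le> y" "y \<le> n" for y using orcm_range[OF a(1)] that by auto
  define c where "c = cut n x a"
  have corc: "orcm (n - 2) (n - 2) c"
  proof (rule orcm_intro)
    fix y assume y: "y \<in> {1..n-2}"
    show "c y \<in> {1..n-2}"
    proof (cases "y < x")
      case True
      have "x + 1 \<le> a y" by (rule big) (use True y in auto)
      moreover have "a y \<le> n" using rng[of y] True y a by auto
      ultimately show ?thesis unfolding c_def cut_def using True y a by auto
    next
      case False
      have "a (y + 2) \<le> x - 1" by (rule small) (use False y in auto)
      moreover have "1 \<le> a (y + 2)" using rng[of "y + 2"] y by auto
      ultimately show ?thesis unfolding c_def cut_def using False y a by auto
    qed
  next
    fix y assume "y \<notin> {1..n-2}" then show "c y = undefined" unfolding c_def cut_def by auto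
  next
    fix y assume y: "1 \<le> y" "y < n - 2"
    consider "Suc y < x" | "Suc y = x" | "x \<le> y" by linarith
    then show "c (Suc y) \<le> c y \<and> c y \<le> Suc (c (Suc y))"
    proof cases
      case 1
      have "x + 1 \<le> a (Suc y)" by (rule big) (use 1 y in auto)
      then show ?thesis unfolding c_def cut_def using 1 y orcm_adj[OF a(1), of y] a by auto
    next
      case 2
      have "a (x + 2) \<le> a (x + 1) \<and> a (x + 1) \<le> Suc (a (x + 2))"
        using orcm_adj[OF a(1), of "x + 1"] 2 y by auto
      then show ?thesis unfolding c_def cut_def using 2 y a by auto
    next
      case 3
      have "a (Suc (y + 2)) \<le> a (y + 2) \<and> a (y + 2) \<le> Suc (a (Suc (y + 2)))"
        using orcm_adj[OF a(1), of "y + 2"] y by auto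
      then show ?thesis unfolding c_def cut_def using 3 y by auto
    qed
  qed
  have cx: "c (x - 1) = x - 1" unfolding c_def cut_def using a by auto
  have fc: "fp (n - 2) c = x - 1" by (rule fp_eq[OF corc]) (use a cx in auto)
  have c1: "c 1 = a 1 - 2" unfolding c_def cut_def using a by auto
  have a1: "x + 1 \<le> a 1" by (rule big) (use a in auto)
  have cn: "c (n - 2) = a n"
  proof (cases "n - 2 < x")
    case True
    then have "n - 2 = x - 1" "n = x + 1" using a by auto
    then show ?thesis using cx a by auto
  next
    case False
    have e: "n - 2 + 2 = n" using a by auto
    show ?thesis unfolding c_def cut_def using a False e by auto
  qed
  have "card (c ` {1..n-2}) = c 1 + 1 - c (n - 2)" by (rule orcm_card_image[OF corc]) (use a in auto)
  moreover have "card (a ` {1..n}) = a 1 + 1 - a n" by (rule orcm_card_image[OF a(1)]) (use a in auto)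
  moreover have "a n \<le> x - 1" by (rule small) (use a in auto)
  ultimately have "card (c ` {1..n-2}) = p - 2" using c1 cn a1 a(2) a(3) by auto
  moreover have "x - 1 \<in> {1..n-2}" using a by auto
  ultimately have cA: "c \<in> AA (n - 2) (p - 2)" unfolding AA_def using corc cx by blast
  have pc: "paste n (x - 1) c = a"
  proof
    fix y
    consider "y \<notin> {1..n}" | "y \<in> {1..n}" "y \<le> x - 1" | "y = x" | "y = x + 1" | "y \<in> {1..n}" "x + 2 \<le> y"
      using a by fastforce
    then show "paste n (x - 1) c y = a y"
    proof cases
      case 1 then show ?thesis unfolding paste_def using orcm_out[OF a(1)] by auto
    next
      case 2
      have "x + 1 \<le> a y" by (rule big) (use 2 in auto)
      then show ?thesis unfolding paste_def c_def cut_def using 2 a by auto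
    next
      case 3 then show ?thesis unfolding paste_def using a by auto
    next
      case 4 then show ?thesis unfolding paste_def using a by auto
    next
      case 5
      have e: "Suc (Suc (y - 2)) = y" using 5 by auto
      show ?thesis unfolding paste_def c_def cut_def using a 5 e by auto
    qed
  qed
  show ?thesis using cA fc pc fx unfolding c_def by auto
qed




lemma paste_props:
  assumes cA: "c \<in> AA (n - 2) (p - 2)" and p: "3 \<le> p" "p \<le> n"
  shows "paste n (fp (n - 2) c) c \<in> A2 n p \<and> fp n (paste n (fp (n - 2) c) c) = fp (n - 2) c + 1 \<and>
         cut n (fp (n - 2) c + 1) (paste n (fp (n - 2) c) c) = c"
proof -
  from cA obtain z where c: "orcm (n - 2) (n - 2) c" "card (c ` {1..n-2}) = p - 2" "z \<in> {1..n-2}" "c z = z"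
    unfolding AA_def by auto
  have fz: "fp (n - 2) c = z" by (rule fp_eq[OF c(1) c(3,4)])
  have rng: "c y \<in> {1..n-2}" if "1 \<le> y" "y \<le> n - 2" for y using orcm_range[OF c(1)] that by auto
  define a where "a = paste n z c"
  have aorc: "orcm n n a"
  proof (rule orcm_intro)
    fix y assume y: "y \<in> {1..n}"
    consider "y \<le> z" | "y = z + 1" | "y = z + 2" | "z + 3 \<le> y" by linarith
    then show "a y \<in> {1..n}"
    proof cases
      case 1
      have "c y \<in> {1..n-2}" by (rule rng) (use 1 y c(3) in auto)
      then show ?thesis unfolding a_def paste_def using 1 y by auto
    next
      case 2 then show ?thesis unfolding a_def paste_def using y c(3) by auto
    next
      case 3 then show ?thesis unfolding a_def paste_def using y c(3) by auto
    next
      case 4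
      have "c (y - 2) \<in> {1..n-2}" by (rule rng) (use 4 y c(3) in auto)
      then show ?thesis unfolding a_def paste_def using 4 y by auto
    qed
  next
    fix y assume "y \<notin> {1..n}" then show "a y = undefined" unfolding a_def paste_def by auto
  next
    fix y assume y: "1 \<le> y" "y < n"
    consider "y < z" | "y = z" | "y = z + 1" | "y = z + 2" | "z + 3 \<le> y" by linarith
    then show "a (Suc y) \<le> a y \<and> a y \<le> Suc (a (Suc y))"
    proof cases
      case 1 then show ?thesis unfolding a_def paste_def using y c(3) orcm_adj[OF c(1), of y] by auto
    next
      case 2 then show ?thesis unfolding a_def paste_def using y c(3,4) by auto
    next
      case 3 then show ?thesis unfolding a_def paste_def using y c(3,4) by auto
    next
      case 4
      have "c (Suc z) \<le> c z \<and> c z \<le> Suc (c (Suc z))" using orcm_adj[OF c(1), of z] 4 y c(3) by auto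
      moreover have "Suc y - 2 = Suc z" using 4 by auto
      ultimately show ?thesis unfolding a_def paste_def using y c(3,4) 4 by auto
    next
      case 5
      have "c (Suc (y - 2)) \<le> c (y - 2) \<and> c (y - 2) \<le> Suc (c (Suc (y - 2)))"
        using orcm_adj[OF c(1), of "y - 2"] 5 y c(3) by auto
      moreover have "Suc y - 2 = Suc (y - 2)" using 5 by auto
      ultimately show ?thesis unfolding a_def paste_def using y 5 by auto
    qed
  qed
  have ax: "a (z + 1) = z + 1" unfolding a_def paste_def using c(3) by auto
  have fa: "fp n a = z + 1" by (rule fp_eq[OF aorc]) (use ax c(3) in auto)
  have a1: "a 1 = c 1 + 2" unfolding a_def paste_def using c(3) by auto
  have an: "a n = c (n - 2)"
  proof (cases "n = z + 2")
    case True then show ?thesis unfolding a_def paste_def using c(3,4) by auto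
  next
    case False then show ?thesis unfolding a_def paste_def using c(3) by auto
  qed
  have cc: "card (c ` {1..n-2}) = c 1 + 1 - c (n - 2)" by (rule orcm_card_image[OF c(1)]) (use c(3) in auto)
  have "card (a ` {1..n}) = a 1 + 1 - a n" by (rule orcm_card_image[OF aorc]) (use c(3) in auto)
  moreover have "c (n - 2) \<le> c 1" using orcm_mono[OF c(1), of 1 "n - 2"] c(3) by auto
  ultimately have card: "card (a ` {1..n}) = p" using a1 an cc c(2) p by linarith
  have "a z = z + 2" "a (z + 2) = z" unfolding a_def paste_def using c(3,4) by auto
  then have aA2: "a \<in> A2 n p" unfolding A2_def AA_def using aorc card ax c(3)
    by (intro CollectI conjI exI[of _ "z + 1"] bexI[of _ "z + 1"]) auto
  have ca: "cut n (z + 1) a = c"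
  proof
    fix y
    show "cut n (z + 1) a y = c y"
      unfolding cut_def a_def paste_def using orcm_out[OF c(1), of y] c(3) by auto
  qed
  show ?thesis using aA2 fa ca fz unfolding a_def by auto
qed

lemma card_A2:
  assumes p: "3 \<le> p" "p \<le> n"
  shows "card (A2 n p) = card (AA (n - 2) (p - 2))"
proof -
  have "bij_betw (\<lambda>a. cut n (fp n a) a) (A2 n p) (AA (n - 2) (p - 2))"
  proof (rule bij_betw_byWitness[where f' = "\<lambda>c. paste n (fp (n - 2) c) c"])
    show "\<forall>a\<in>A2 n p. paste n (fp (n - 2) (cut n (fp n a) a)) (cut n (fp n a) a) = a"
      using cut_props by auto
    show "\<forall>c\<in>AA (n - 2) (p - 2). cut n (fp n (paste n (fp (n - 2) c) c)) (paste n (fp (n - 2) c) c) = c"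
      using paste_props[OF _ p] by auto
    show "(\<lambda>a. cut n (fp n a) a) ` A2 n p \<subseteq> AA (n - 2) (p - 2)"
      using cut_props by auto
    show "(\<lambda>c. paste n (fp (n - 2) c) c) ` AA (n - 2) (p - 2) \<subseteq> A2 n p"
      using paste_props[OF _ p] by auto
  qed
  then show ?thesis by (rule bij_betw_same_card)
qed



lemma card_AA_split:
  assumes n: "2 \<le> n" and p: "1 \<le> p"
  shows "card (AA n p) = (n + 1 - p) * ((n - 2) choose (p - 1)) + card (A2 n p)"
proof -
  have sub: "A2 n p \<subseteq> AA n p" unfolding A2_def by auto
  have "card (A1 n p) = card (AA n p) - card (A2 n p)"
    unfolding A1_def by (rule card_Diff_subset[OF finite_subset[OF sub finite_AA] sub])
  moreover have "card (A2 n p) \<le> card (AA n p)" by (rule card_mono[OF finite_AA sub])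
  moreover have "card (A1 n p) = (n + 1 - p) * ((n - 2) choose (p - 1))"
  proof -
    have "card (FF (n - 1) n p) = (n + 1 - p) * ((n - 1 - 1) choose (p - 1))"
      by (rule card_FF) (use n p in auto)
    moreover have "n - 1 - 1 = n - 2" by simp
    ultimately show ?thesis using card_A1[OF n, of p] by simp
  qed
  ultimately show ?thesis by linarith
qed

theorem lemma3p8:
  shows "(\<forall>n\<ge>1. b n 1 = n) \<and> b 2 2 = 0 \<and>
    (\<forall>n p. 2 \<le> p \<and> p \<le> n \<longrightarrow>
       b n p = (n - p + 1) * ((n - 2) choose (p - 1)) + b (n - 2) (p - 2))"
proof -
  have rec: "b n p = (n - p + 1) * ((n - 2) choose (p - 1)) + b (n - 2) (p - 2)"
    if "2 \<le> p" "p \<le> n" for n p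
  proof -
    have "b n p = (n + 1 - p) * ((n - 2) choose (p - 1)) + card (A2 n p)"
      using b_eq[of p n] card_AA_split[of n p] that by auto
    moreover have "card (A2 n p) = b (n - 2) (p - 2)"
    proof (cases "p = 2")
      case True then show ?thesis using A2_empty[of p n] unfolding b_def by auto
    next
      case False
      then have "3 \<le> p" using that by auto
      then show ?thesis using card_A2[of p n] b_eq[of "p - 2" "n - 2"] that by auto
    qed
    moreover have "n + 1 - p = n - p + 1" using that by auto
    ultimately show ?thesis by metis
  qed
  have one: "b n 1 = n" if "1 \<le> n" for n
  proof (cases "n = 1")
    case True
    have "AA 1 1 = FF 1 1 1"
    proof (intro set_eqI iffI)
      fix g assume "g \<in> AA 1 1" then show "g \<in> FF 1 1 1" unfolding AA_def FF_def by auto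
    next
      fix g assume g: "g \<in> FF 1 1 1"
      then have "g 1 \<in> {1..1}" using orcm_range[of 1 1 g 1] unfolding FF_def by auto
      then show "g \<in> AA 1 1" using g unfolding AA_def FF_def by auto
    qed
    then show ?thesis using True b_eq[of 1 1] card_FF[of 1 1 1] by auto
  next
    case False
    then have "2 \<le> n" using that by auto
    then show ?thesis using b_eq[of 1 n] card_AA_split[of n 1] A2_empty[of 1 n] by auto
  qed
  have "b 2 2 = 0" using rec[of 2 2] unfolding b_def by auto
  then show ?thesis using rec one by auto
qed



end
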